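(* Let $\{\psi_j\}_{j\ge1}$ be the Fourier basis of $L^2([0,1])$: $\psi_1\equiv1$, $\psi_{2j}(t)=\sqrt2\cos(2\pi jt)$, $\psi_{2j+1}(t)=\sqrt2\sin(2\pi jt)$ for $j\in\mathbb N$. For $j,k\in\mathbb N$ let $\Lambda_{j,k}=\log(2(j\vee k))$. There exists a constant $c_{L,W}>0$, independent of $j$ and $k$, such that for all $j,k\in\mathbb N$ and all $\epsilon\in(0,1/2)$ there exists a deep ReLU network $\widetilde\Psi_{jk}:[0,1]^2\to\mathbb R$ of depth $L\le c_{L,W}\Lambda_{j,k}\log^2(1/\epsilon)$ and width $W\le c_{L,W}\Lambda_{j,k}\log^3(1/\epsilon)$ satisfying \[ \sup_{(s,t)\in[0,1]^2}\big|\psi_j(s)\psi_k(t)-\widetilde\Psi_{jk}(s,t)\big|\le\epsilon . \]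
   Context: A deep ReLU network of depth $L$ and width $W$ is a map of the form $x\mapsto A_L\sigma_{b_L}A_{L-1}\cdots A_1\sigma_{b_1}A_0x$ with matrices $A_l$ having at most $W$ rows/columns in hidden layers, bias vectors $b_l$, and $\sigma_b(y)=(\max\{y_i-b_i,0\})_i$. *)

theory Defs
  imports Complex_Main
begin

text \<open>Fourier basis of L2([0,1]), indexed from 1 (index 0 is unused and set to 0).\<close>
definition fourier_psi :: "nat \<Rightarrow> real \<Rightarrow> real" where
  "fourier_psi n t =
     (if n = 0 then 0
      else if n = 1 then 1
      else if even n then sqrt 2 * cos (2 * pi * real (n div 2) * t)
      else sqrt 2 * sin (2 * pi * real (n div 2) * t))"

definition mat_app :: "(nat \<Rightarrow> nat \<Rightarrow> real) \<Rightarrow> nat \<Rightarrow> (nat \<Rightarrow> real) \<Rightarrow> (nat \<Rightarrow> real)" where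
  "mat_app A n x = (\<lambda>i. \<Sum>j<n. A i j * x j)"

definition relu_shift :: "(nat \<Rightarrow> real) \<Rightarrow> (nat \<Rightarrow> real) \<Rightarrow> (nat \<Rightarrow> real)" where
  "relu_shift b y = (\<lambda>i. max (y i - b i) 0)"

text \<open>Evaluation of x |-> A_L sigma_{b_L} A_{L-1} ... A_1 sigma_{b_1} A_0 x,
  where d = [d_0, d_1, ..., d_{L+1}] are the layer dimensions, As = [A_0, ..., A_L]
  (A_l is a d_{l+1} x d_l matrix) and bs = [b_1, ..., b_L].\<close>
definition relu_net_eval ::
  "nat list \<Rightarrow> (nat \<Rightarrow> nat \<Rightarrow> real) list \<Rightarrow> (nat \<Rightarrow> real) list \<Rightarrow> (nat \<Rightarrow> real) \<Rightarrow> (nat \<Rightarrow> real)" where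
  "relu_net_eval d As bs x =
     foldl (\<lambda>h (A, b, n). mat_app A n (relu_shift b h))
           (mat_app (hd As) (hd d) x)
           (zip (tl As) (zip bs (tl d)))"

definition is_relu_net ::
  "nat \<Rightarrow> nat \<Rightarrow> nat \<Rightarrow> nat \<Rightarrow> nat list \<Rightarrow> (nat \<Rightarrow> nat \<Rightarrow> real) list \<Rightarrow> (nat \<Rightarrow> real) list \<Rightarrow> bool" where
  "is_relu_net din dout L W d As bs \<longleftrightarrow>
     length d = L + 2 \<and> d ! 0 = din \<and> d ! (L + 1) = dout \<and>
     length As = L + 1 \<and> length bs = L \<and>
     (\<forall>l\<in>{1..L}. d ! l \<le> W)"

end

theory Submission
  imports Defs
begin
section \<open>Analytic part\<close>

lemma cos_taylor4: fixes x :: real shows "\<bar>cos x - (1 - x^2/2)\<bar> \<le> x^4/24"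
proof -
  obtain t where t: "cos x = (\<Sum>m<4. cos_coeff m * x ^ m) + (cos(t + 1/2 * real 4 * pi) / fact 4) * x ^ 4"
    using Maclaurin_cos_expansion[of x 4] by blast
  have s: "(\<Sum>m<4. cos_coeff m * x ^ m) = 1 - x^2/2"
    by (simp add: cos_coeff_def lessThan_nat_numeral fact_numeral)
  have "\<bar>cos t\<bar> * x^4 \<le> x^4"
    by (intro mult_left_le_one_le) (auto simp: abs_cos_le_one)
  then have "\<bar>cos(t + 1/2 * real 4 * pi) / fact 4 * x ^ 4\<bar> \<le> x^4/24"
    by (simp add: fact_numeral abs_mult divide_le_cancel)
  then show ?thesis using t s by simp
qed

definition Hf :: "real \<Rightarrow> real" where
  "Hf z = 2 * max z 0 - 4 * max (z - 1/2) 0 + 2 * max (z - 1) 0"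

definition Ef :: "real \<Rightarrow> real" where "Ef z = z - z^2"

lemma Hf_unit:
  assumes "0 \<le> z" "z \<le> 1"
  shows "0 \<le> Hf z \<and> Hf z \<le> 1 \<and> Ef z = Hf z / 4 + Ef (Hf z) / 4"
proof (cases "z \<le> 1/2")
  case True
  then have "Hf z = 2 * z" using assms by (simp add: Hf_def)
  then show ?thesis using assms True by (simp add: Ef_def power2_eq_square field_simps)
next
  case False
  then have h: "Hf z = 2 - 2 * z" using assms by (simp add: Hf_def)
  show ?thesis unfolding h using assms False by (simp add: Ef_def power2_eq_square field_simps)
qed

lemma Ef_bounds: "0 \<le> z \<Longrightarrow> z \<le> 1 \<Longrightarrow> 0 \<le> Ef z \<and> Ef z \<le> 1/4"
proof -
  assume a: "0 \<le> z" "z \<le> 1"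
  have "0 \<le> (z - 1/2)^2" by simp
  moreover have "z * z \<le> z * 1" using a by (intro mult_left_mono) auto
  ultimately show ?thesis using a unfolding Ef_def by (auto simp: power2_eq_square algebra_simps)
qed

definition run :: "'a \<Rightarrow> ('a \<Rightarrow> 'a) list \<Rightarrow> 'a" where
  "run p Ts = foldl (\<lambda>p T. T p) p Ts"

lemma run_Nil[simp]: "run p [] = p" by (simp add: run_def)
lemma run_Cons[simp]: "run p (T # Ts) = run (T p) Ts" by (simp add: run_def)
lemma run_append[simp]: "run p (Ts @ Us) = run (run p Ts) Us" by (simp add: run_def)

definition hatT :: "nat \<Rightarrow> real \<times> real \<times> real \<Rightarrow> real \<times> real \<times> real" where
  "hatT s p = (case p of (u, z, a) \<Rightarrow> (u, Hf z, a + Hf z / 4 ^ s))"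

definition hats :: "nat \<Rightarrow> (real \<times> real \<times> real \<Rightarrow> real \<times> real \<times> real) list" where
  "hats r = map hatT [1..<Suc r]"

lemma hats_inv:
  assumes "0 \<le> v" "v \<le> 1"
  shows "run (v, v, 0) (hats r) = (u', z', a') \<Longrightarrow> u' = v \<and> 0 \<le> z' \<and> z' \<le> 1 \<and> Ef v = a' + Ef z' / 4 ^ r"
proof (induction r arbitrary: u' z' a')
  case 0
  then show ?case using assms by (auto simp: hats_def)
next
  case (Suc r)
  obtain u z a where uza: "run (v, v, 0) (hats r) = (u, z, a)" by (cases "run (v, v, 0) (hats r)") auto
  note IH = Suc.IH[OF uza]
  have "hats (Suc r) = hats r @ [hatT (Suc r)]" by (simp add: hats_def)
  then have "(u', z', a') = (u, Hf z, a + Hf z / 4 ^ Suc r)"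
    using Suc.prems uza by (auto simp: hatT_def)
  moreover have "Hf z / 4 ^ Suc r + Ef (Hf z) / 4 ^ Suc r = Ef z / 4 ^ r"
  proof -
    have h4: "Hf z + Ef (Hf z) = 4 * Ef z" using Hf_unit[of z] IH by auto
    have "Hf z / 4 ^ Suc r + Ef (Hf z) / 4 ^ Suc r = (Hf z + Ef (Hf z)) / 4 ^ Suc r"
      by (simp add: add_divide_distrib)
    also have "\<dots> = Ef z / 4 ^ r" unfolding h4 by simp
    finally show ?thesis .
  qed
  ultimately show ?case using IH Hf_unit[of z] by auto
qed

lemma hats_err:
  assumes "0 \<le> v" "v \<le> 1" "run (v, v, 0) (hats r) = (u', z', a')"
  shows "u' = v \<and> \<bar>u' - a' - v^2\<bar> \<le> 1 / (4 * 4 ^ r)"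
proof -
  note h = hats_inv[OF assms]
  have e: "0 \<le> Ef z' \<and> Ef z' \<le> 1/4" using Ef_bounds h by auto
  have "u' - a' - v^2 = Ef z' / 4 ^ r" using h by (simp add: Ef_def)
  moreover have "Ef z' / 4 ^ r \<le> 1 / (4 * 4 ^ r)" using e by (simp add: field_simps)
  ultimately show ?thesis using h e by simp
qed

definition absclamp :: "real \<Rightarrow> real" where
  "absclamp w = max w 0 - max (w - 1) 0 + max (- w) 0 - max (- w - 1) 0"

lemma absclamp_eq: "absclamp w = \<bar>max (-1) (min w 1)\<bar>"
  unfolding absclamp_def by (auto simp: max_def min_def)

lemma absclamp_range: "0 \<le> absclamp w \<and> absclamp w \<le> 1"
  unfolding absclamp_eq by auto

lemma absclamp_id: "0 \<le> w \<Longrightarrow> w \<le> 1 \<Longrightarrow> absclamp w = w"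
  unfolding absclamp_eq by auto

lemma absclamp_sq:
  assumes "\<bar>C\<bar> \<le> 1"
  shows "\<bar>(absclamp w)^2 - C^2\<bar> \<le> 2 * \<bar>w - C\<bar>"
proof -
  define q where "q = max (-1) (min w 1)"
  have q1: "\<bar>q\<bar> \<le> 1" unfolding q_def by auto
  have q2: "\<bar>q - C\<bar> \<le> \<bar>w - C\<bar>" using assms unfolding q_def by (auto simp: max_def min_def)
  have "(absclamp w)^2 = q^2" unfolding absclamp_eq q_def by simp
  then have "\<bar>(absclamp w)^2 - C^2\<bar> = \<bar>q - C\<bar> * \<bar>q + C\<bar>"
    by (simp add: power2_eq_square abs_mult[symmetric] algebra_simps)
  also have "\<dots> \<le> \<bar>w - C\<bar> * 2"
    using q1 q2 assms by (intro mult_mono) auto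
  finally show ?thesis by simp
qed

definition startT :: "real \<Rightarrow> real \<Rightarrow> real \<times> real \<times> real \<Rightarrow> real \<times> real \<times> real" where
  "startT \<alpha> \<beta> p = (case p of (u, z, a) \<Rightarrow> (absclamp (\<alpha> * (u - a) + \<beta>), absclamp (\<alpha> * (u - a) + \<beta>), 0))"

definition stage :: "nat \<Rightarrow> real \<Rightarrow> real \<Rightarrow> (real \<times> real \<times> real \<Rightarrow> real \<times> real \<times> real) list" where
  "stage r \<alpha> \<beta> = startT \<alpha> \<beta> # hats r"

definition Dv :: "real \<times> real \<times> real \<Rightarrow> real" where "Dv p = fst p - snd (snd p)"

lemma stage_err:
  "\<bar>Dv (run p (stage r \<alpha> \<beta>)) - (absclamp (\<alpha> * Dv p + \<beta>))^2\<bar> \<le> 1 / (4 * 4 ^ r)"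
proof -
  obtain u z a where p: "p = (u, z, a)" by (cases p) auto
  define v where "v = absclamp (\<alpha> * (u - a) + \<beta>)"
  obtain u' z' a' where q: "run (v, v, 0) (hats r) = (u', z', a')" by (cases "run (v, v, 0) (hats r)") auto
  have "run p (stage r \<alpha> \<beta>) = (u', z', a')" using q by (simp add: stage_def startT_def p v_def)
  moreover have "0 \<le> v" "v \<le> 1" using absclamp_range v_def by auto
  ultimately have "Dv (run p (stage r \<alpha> \<beta>)) = v - a'" "\<bar>v - a' - v^2\<bar> \<le> 1 / (4 * 4 ^ r)"
    using hats_err[OF _ _ q] by (auto simp: Dv_def)
  then show ?thesis by (simp add: Dv_def p v_def)
qed

lemma double_step:
  assumes "\<bar>Dv q - (absclamp w)^2\<bar> \<le> \<delta>" "\<bar>w - cos \<phi>\<bar> + \<delta> \<le> E"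
  shows "\<bar>(2 * Dv q - 1) - cos (2 * \<phi>)\<bar> + \<delta> \<le> 4 * E"
proof -
  have c: "\<bar>cos \<phi>\<bar> \<le> 1" by (rule abs_cos_le_one)
  have cd: "cos (2 * \<phi>) = 2 * (cos \<phi>)^2 - 1" by (rule cos_double_cos)
  have eq: "(2 * Dv q - 1) - cos (2 * \<phi>) = 2 * (Dv q - (absclamp w)^2) + 2 * ((absclamp w)^2 - (cos \<phi>)^2)"
    unfolding cd by (simp add: algebra_simps)
  have "\<bar>(2 * Dv q - 1) - cos (2 * \<phi>)\<bar> \<le> \<bar>2 * (Dv q - (absclamp w)^2)\<bar> + \<bar>2 * ((absclamp w)^2 - (cos \<phi>)^2)\<bar>"
    unfolding eq by (rule abs_triangle_ineq)
  also have "\<dots> = 2 * \<bar>Dv q - (absclamp w)^2\<bar> + 2 * \<bar>(absclamp w)^2 - (cos \<phi>)^2\<bar>"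
    unfolding abs_mult by simp
  also have "\<dots> \<le> 2 * \<delta> + 4 * \<bar>w - cos \<phi>\<bar>"
    using assms(1) absclamp_sq[OF c, of w] by simp
  finally have f: "\<bar>(2 * Dv q - 1) - cos (2 * \<phi>)\<bar> \<le> 2 * \<delta> + 4 * \<bar>w - cos \<phi>\<bar>" .
  have d0: "0 \<le> \<delta>" using assms(1) by (meson abs_ge_zero order_trans)
  have gen: "\<And>a b. a \<le> 2 * \<delta> + 4 * b \<Longrightarrow> b + \<delta> \<le> E \<Longrightarrow> a + \<delta> \<le> 4 * E" using d0 by linarith
  show ?thesis by (rule gen[OF f assms(2)])
qed

lemma iter_err:
  assumes "\<bar>Dv q - (absclamp w)^2\<bar> \<le> 1 / (4 * 4 ^ r)" "\<bar>w - cos \<phi>\<bar> + 1 / (4 * 4 ^ r) \<le> E"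
  shows "\<exists>w'. \<bar>Dv (run q (concat (replicate i (stage r 2 (-1))))) - (absclamp w')^2\<bar> \<le> 1 / (4 * 4 ^ r)
     \<and> \<bar>w' - cos (2 ^ i * \<phi>)\<bar> + 1 / (4 * 4 ^ r) \<le> 4 ^ i * E"
  using assms
proof (induction i arbitrary: q w \<phi> E)
  case 0
  then show ?case by auto
next
  case (Suc i)
  define q1 where "q1 = run q (stage r 2 (-1))"
  have h1: "\<bar>Dv q1 - (absclamp (2 * Dv q - 1))^2\<bar> \<le> 1 / (4 * 4 ^ r)"
    using stage_err[of q r 2 "-1"] unfolding q1_def by simp
  have h2: "\<bar>(2 * Dv q - 1) - cos (2 * \<phi>)\<bar> + 1 / (4 * 4 ^ r) \<le> 4 * E"
    by (rule double_step[OF Suc.prems])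
  obtain w' where w': "\<bar>Dv (run q1 (concat (replicate i (stage r 2 (-1))))) - (absclamp w')^2\<bar> \<le> 1 / (4 * 4 ^ r)"
     "\<bar>w' - cos (2 ^ i * (2 * \<phi>))\<bar> + 1 / (4 * 4 ^ r) \<le> 4 ^ i * (4 * E)"
    using Suc.IH[OF h1 h2] by blast
  have "run q (concat (replicate (Suc i) (stage r 2 (-1)))) = run q1 (concat (replicate i (stage r 2 (-1))))"
    by (simp add: q1_def)
  moreover have "2 ^ i * (2 * \<phi>) = 2 ^ Suc i * \<phi>" by simp
  ultimately show ?case using w' by (auto simp: algebra_simps)
qed

lemma cos_stage_err:
  fixes y :: real and n :: nat
  assumes y: "0 \<le> y" "y \<le> 1" and n: "1 \<le> n"
  defines "Ts \<equiv> stage (2*n) 1 0 @ stage (2*n) (- (2 * pi^2 / 4 ^ n)) 1 @ concat (replicate (n - 1) (stage (2*n) 2 (-1)))"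
  shows "\<bar>(2 * Dv (run (y, z0, 0) Ts) - 1) - cos (2 * pi * y)\<bar> \<le> 180 / 4 ^ n"
proof -
  define r where "r = 2 * n"
  define \<delta> :: real where "\<delta> = 1 / (4 * 4 ^ r)"
  define \<kappa> :: real where "\<kappa> = 2 * pi^2 / 4 ^ n"
  define \<theta> where "\<theta> = 2 * pi * y / 2 ^ n"
  define q1 where "q1 = run (y, z0, 0) (stage r 1 0)"
  have h1: "\<bar>Dv q1 - y^2\<bar> \<le> \<delta>"
    using stage_err[of "(y, z0, 0)" r 1 0] y unfolding q1_def \<delta>_def by (simp add: Dv_def absclamp_id)
  define q2 where "q2 = run q1 (stage r (- \<kappa>) 1)"
  define w0 where "w0 = - \<kappa> * Dv q1 + 1"
  have h2: "\<bar>Dv q2 - (absclamp w0)^2\<bar> \<le> \<delta>"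
    using stage_err[of q1 r "- \<kappa>" 1] unfolding q2_def \<delta>_def w0_def by simp
  have k0: "0 \<le> \<kappa>" unfolding \<kappa>_def by simp
  have p42: "(4::real)^n = (2^n)^2" by (simp add: power2_eq_square power_mult_distrib[symmetric])
  have ky: "\<kappa> * y^2 = \<theta>^2 / 2"
    unfolding \<kappa>_def \<theta>_def p42 by (simp add: power_mult_distrib power_divide field_simps)
  have weq: "w0 - cos \<theta> = (1 - \<theta>^2/2 - cos \<theta>) + \<kappa> * (y^2 - Dv q1)"
    unfolding w0_def using ky by (simp add: algebra_simps)
  have "\<bar>w0 - cos \<theta>\<bar> \<le> \<bar>1 - \<theta>^2/2 - cos \<theta>\<bar> + \<bar>\<kappa> * (y^2 - Dv q1)\<bar>"
    unfolding weq by (rule abs_triangle_ineq)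
  also have "\<dots> = \<bar>cos \<theta> - (1 - \<theta>^2/2)\<bar> + \<kappa> * \<bar>Dv q1 - y^2\<bar>"
    using k0 by (simp add: abs_mult abs_minus_commute)
  also have "\<dots> \<le> \<theta>^4/24 + \<kappa> * \<delta>"
    using cos_taylor4[of \<theta>] h1 k0 by (intro add_mono mult_left_mono) auto
  finally have e0: "\<bar>w0 - cos \<theta>\<bar> + \<delta> \<le> \<theta>^4/24 + \<kappa> * \<delta> + \<delta>" by simp
  obtain w' where w': "\<bar>Dv (run q2 (concat (replicate (n - 1) (stage r 2 (-1))))) - (absclamp w')^2\<bar> \<le> \<delta>"
     "\<bar>w' - cos (2 ^ (n - 1) * \<theta>)\<bar> + \<delta> \<le> 4 ^ (n - 1) * (\<theta>^4/24 + \<kappa> * \<delta> + \<delta>)"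
    using iter_err[OF h2[unfolded \<delta>_def] e0[unfolded \<delta>_def], of "n - 1"] unfolding \<delta>_def by blast
  have runeq: "run (y, z0, 0) Ts = run q2 (concat (replicate (n - 1) (stage r 2 (-1))))"
    unfolding Ts_def q2_def q1_def r_def \<kappa>_def by simp
  have fin: "\<bar>(2 * Dv (run (y, z0, 0) Ts) - 1) - cos (2 * (2 ^ (n - 1) * \<theta>))\<bar> + \<delta> \<le> 4 * (4 ^ (n - 1) * (\<theta>^4/24 + \<kappa> * \<delta> + \<delta>))"
    unfolding runeq by (rule double_step[OF w'])
  have nn: "2 * (2 ^ (n - 1) * \<theta>) = 2 * pi * y"
  proof -
    have "(2::real) * 2 ^ (n - 1) = 2 ^ n" using n by (cases n) auto
    then show ?thesis unfolding \<theta>_def by (simp add: field_simps)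
  qed
  have nn4: "4 * (4 ^ (n - 1) :: real) = 4 ^ n" using n by (cases n) auto
  define X :: real where "X = 4 ^ n"
  have X4: "4 \<le> X" unfolding X_def using n by (metis numeral_le_iff power_increasing power_one_right semiring_norm(69) numeral_One one_le_numeral order.refl) 
  have dX: "\<delta> = 1 / (4 * X^2)" unfolding \<delta>_def X_def r_def by (simp add: power_mult power2_eq_square flip: power_mult_distrib)
  have th4: "\<theta>^4 \<le> 4096 / X^2"
  proof -
    have "\<theta> = 2 * pi * y / 2 ^ n" by (simp add: \<theta>_def)
    have t0: "0 \<le> \<theta>" unfolding \<theta>_def using y by simp
    have py: "pi * y \<le> pi" using y by (simp add: mult_left_le)
    have "2 * pi * y \<le> 8" using py pi_less_4 by linarith
    then have t1: "\<theta> \<le> 8 / 2 ^ n" unfolding \<theta>_def by (rule divide_right_mono) simp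
    have "\<theta>^4 \<le> (8 / 2 ^ n)^4" using t0 t1 by (intro power_mono) auto
    also have "\<dots> = 4096 / ((2 ^ n)^2)^2" by (simp add: power_divide flip: power_mult)
    also have "\<dots> = 4096 / X^2" unfolding X_def p42 ..
    finally show ?thesis .
  qed
  have "pi * pi \<le> 4 * 4" using pi_less_4 pi_gt_zero by (intro mult_mono) auto
  then have "2 * pi^2 \<le> 32" by (simp add: power2_eq_square)
  then have kX: "\<kappa> \<le> 32 / X" unfolding \<kappa>_def X_def by (rule divide_right_mono) simp
  have "4 ^ n * (\<theta>^4/24 + \<kappa> * \<delta> + \<delta>) \<le> 180 / X"
  proof -
    have X0: "0 < X" using X4 by simp
    have a1: "X * (\<theta>^4/24) \<le> 171 / X"
    proof -
      have "X * (\<theta>^4/24) \<le> X * ((4096 / X^2)/24)" using th4 X0 by (intro mult_left_mono divide_right_mono) auto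
      also have "\<dots> = (4096/24) / X" using X0 by (simp add: power2_eq_square field_simps)
      also have "\<dots> \<le> 171 / X" using X0 by (intro divide_right_mono) auto
      finally show ?thesis .
    qed
    have d0: "0 \<le> \<delta>" using dX X0 by simp
    have a2: "X * (\<kappa> * \<delta>) \<le> 8 / X"
    proof -
      have "X * (\<kappa> * \<delta>) \<le> X * ((32 / X) * \<delta>)" using kX X0 d0 by (intro mult_left_mono mult_right_mono) auto
      also have "\<dots> = 8 / X^2" unfolding dX using X0 by (simp add: power2_eq_square field_simps)
      also have "\<dots> \<le> 8 / X" using X4 by (simp add: power2_eq_square field_simps)
      finally show ?thesis .
    qed
    have a3: "X * \<delta> \<le> 1 / X" unfolding dX using X0 by (simp add: power2_eq_square field_simps)
    have "X * (\<theta>^4/24 + \<kappa> * \<delta> + \<delta>) \<le> 171 / X + 8 / X + 1 / X" using a1 a2 a3 by (simp add: algebra_simps)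
    then show ?thesis unfolding X_def by simp
  qed
  then have bnd: "4 ^ n * (\<theta>^4/24 + \<kappa> * \<delta> + \<delta>) \<le> 180 / 4 ^ n" unfolding X_def .
  have e4: "4 * (4 ^ (n - 1) * (\<theta>^4/24 + \<kappa> * \<delta> + \<delta>)) = 4 ^ n * (\<theta>^4/24 + \<kappa> * \<delta> + \<delta>)"
    by (metis mult.assoc nn4)
  have d0: "0 \<le> \<delta>" unfolding \<delta>_def by simp
  have "\<bar>(2 * Dv (run (y, z0, 0) Ts) - 1) - cos (2 * pi * y)\<bar> + \<delta> \<le> 4 ^ n * (\<theta>^4/24 + \<kappa> * \<delta> + \<delta>)"
    using fin unfolding nn e4 .
  then show ?thesis using bnd d0 by linarith
qed

lemma cos_shift: "cos (2 * pi * (t + real K)) = cos (2 * pi * t)"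
proof -
  have c: "cos (2 * pi * real K) = 1" by (metis cos_2npi mult.commute mult.assoc)
  have s: "sin (2 * pi * real K) = 0" by (metis sin_2npi mult.commute mult.assoc)
  show ?thesis by (simp add: distrib_left cos_add c s)
qed

lemma cos_shift_minus: "cos (2 * pi * (real K - t)) = cos (2 * pi * t)"
proof -
  have c: "cos (2 * pi * real K) = 1" by (metis cos_2npi mult.commute mult.assoc)
  have s: "sin (2 * pi * real K) = 0" by (metis sin_2npi mult.commute mult.assoc)
  show ?thesis by (simp add: right_diff_distrib cos_diff c s)
qed

lemma cos_fold: "cos (2 * pi * (real N - \<bar>x - real N\<bar>)) = cos (2 * pi * x)"
proof (cases "x \<ge> real N")
  case True
  then have "real N - \<bar>x - real N\<bar> = real (2 * N) - x" by simp
  then show ?thesis using cos_shift_minus[of "2 * N" x] by simp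
next
  case False
  then show ?thesis by simp
qed

definition foldT :: "real \<Rightarrow> real \<times> real \<times> real \<Rightarrow> real \<times> real \<times> real" where
  "foldT c p = (case p of (u, z, a) \<Rightarrow> (c - \<bar>u - c\<bar>, 0, 0))"

primrec foldlist :: "nat \<Rightarrow> (real \<times> real \<times> real \<Rightarrow> real \<times> real \<times> real) list" where
  "foldlist 0 = []"
| "foldlist (Suc l) = foldT (2 ^ l) # foldlist l"

lemma length_foldlist[simp]: "length (foldlist l) = l" by (induction l) auto

lemma folds:
  "0 \<le> x \<Longrightarrow> x \<le> 2 ^ l \<Longrightarrow> \<exists>y. run (x, 0, 0) (foldlist l) = (y, 0, 0) \<and> 0 \<le> y \<and> y \<le> 1 \<and> cos (2 * pi * y) = cos (2 * pi * x)"
proof (induction l arbitrary: x)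
  case 0
  then show ?case by auto
next
  case (Suc l)
  define x' where "x' = 2 ^ l - \<bar>x - 2 ^ l\<bar>"
  have r: "0 \<le> x'" "x' \<le> 2 ^ l" using Suc.prems unfolding x'_def by auto
  have c: "cos (2 * pi * x') = cos (2 * pi * x)"
    using cos_fold[of "2 ^ l" x] unfolding x'_def by simp
  obtain y where y: "run (x', 0, 0) (foldlist l) = (y, 0, 0) \<and> 0 \<le> y \<and> y \<le> 1 \<and> cos (2 * pi * y) = cos (2 * pi * x')"
    using Suc.IH[OF r] by blast
  have "run (x, 0, 0) (foldlist (Suc l)) = run (x', 0, 0) (foldlist l)" by (simp add: foldT_def x'_def)
  then show ?case using y c by auto
qed

definition amp :: "nat \<Rightarrow> real" where "amp n = (if n = 1 then 1 else sqrt 2)"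
definition fr :: "nat \<Rightarrow> real" where "fr n = real (n div 2)"
definition ph :: "nat \<Rightarrow> real" where "ph n = (if 2 \<le> n \<and> odd n then - 1/4 else 0)"

lemma psi_rep: "1 \<le> n \<Longrightarrow> fourier_psi n t = amp n * cos (2 * pi * (fr n * t + ph n))"
proof -
  assume n: "1 \<le> n"
  consider "n = 1" | "even n" "n \<noteq> 1" | "odd n" "n \<noteq> 1" by blast
  then show ?thesis
  proof cases
    case 1
    then show ?thesis by (simp add: fourier_psi_def amp_def fr_def ph_def)
  next
    case 2
    then show ?thesis using n by (simp add: fourier_psi_def amp_def fr_def ph_def mult.assoc)
  next
    case 3
    then have n2: "2 \<le> n" using n by auto
    have "cos (2 * pi * (fr n * t + - 1/4)) = sin (2 * pi * real (n div 2) * t)"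
    proof -
      have "2 * pi * (fr n * t + - 1/4) = 2 * pi * real (n div 2) * t - pi / 2" by (simp add: fr_def algebra_simps)
      then show ?thesis by (simp add: cos_diff)
    qed
    then show ?thesis using 3 n2 by (simp add: fourier_psi_def amp_def ph_def)
  qed
qed

lemma prod_rep:
  assumes "1 \<le> j" "1 \<le> k"
  shows "fourier_psi j s * fourier_psi k t =
    (amp j * amp k / 2) * (cos (2 * pi * (fr j * s + fr k * t + (ph j + ph k + 1)))
                          + cos (2 * pi * (fr j * s - fr k * t + (ph j - ph k + fr k + 1))))"
proof -
  define A where "A = fr j * s + ph j"
  define B where "B = fr k * t + ph k"
  have e1: "cos (2 * pi * (fr j * s + fr k * t + (ph j + ph k + 1))) = cos (2 * pi * A + 2 * pi * B)"
    using cos_shift[of "A + B" 1] by (simp add: A_def B_def algebra_simps)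
  have e2: "cos (2 * pi * (fr j * s - fr k * t + (ph j - ph k + fr k + 1))) = cos (2 * pi * A - 2 * pi * B)"
    using cos_shift[of "A - B" "k div 2 + 1"] by (simp add: A_def B_def fr_def algebra_simps)
  show ?thesis unfolding e1 e2 psi_rep[OF assms(1)] psi_rep[OF assms(2)] A_def[symmetric] B_def[symmetric]
    by (simp add: cos_add cos_diff algebra_simps)
qed

section \<open>Network calculus\<close>

definition stp :: "(nat \<Rightarrow> real) \<Rightarrow> (nat \<Rightarrow> nat \<Rightarrow> real) \<times> (nat \<Rightarrow> real) \<times> nat \<Rightarrow> (nat \<Rightarrow> real)" where
  "stp = (\<lambda>h (A, b, n). mat_app A n (relu_shift b h))"

definition NN :: "nat \<Rightarrow> nat \<Rightarrow> nat \<Rightarrow> nat \<Rightarrow> ((nat \<Rightarrow> real) \<Rightarrow> (nat \<Rightarrow> real)) \<Rightarrow> bool" where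
  "NN n m L W F \<longleftrightarrow> (\<exists>A0 Ls. length Ls = L \<and> (\<forall>l\<in>set Ls. snd (snd l) \<le> W) \<and>
      (\<forall>x. \<forall>i<m. foldl stp (mat_app A0 n x) Ls i = F x i))"

definition L1 :: "nat \<Rightarrow> nat \<Rightarrow> nat \<Rightarrow> ((nat \<Rightarrow> real) \<Rightarrow> (nat \<Rightarrow> real)) \<Rightarrow> bool" where
  "L1 n m w F \<longleftrightarrow> (\<exists>M b Q. \<forall>x. \<forall>i<m. F x i = (\<Sum>k<w. Q i k * max ((\<Sum>j<n. M k j * x j) - b k) 0))"

definition affine :: "nat \<Rightarrow> ((nat \<Rightarrow> real) \<Rightarrow> real) \<Rightarrow> bool" where
  "affine n f \<longleftrightarrow> (\<exists>v c. \<forall>x. f x = (\<Sum>j<n. v j * x j) + c)"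

lemma affine_const: "affine n (\<lambda>x. c)"
  unfolding affine_def by (rule exI[of _ "\<lambda>j. 0"]) auto

lemma affine_proj: "q < n \<Longrightarrow> affine n (\<lambda>x. x q)"
proof -
  assume q: "q < n"
  have "(\<Sum>j<n. (if j = q then 1 else 0) * x j) = (\<Sum>j<n. if j = q then x j else 0)" for x :: "nat \<Rightarrow> real"
    by (rule sum.cong) auto
  then show ?thesis unfolding affine_def using q
    by (intro exI[of _ "\<lambda>j. if j = q then 1 else 0"] exI[of _ 0]) (simp add: sum.delta)
qed

lemma affine_add: "affine n f \<Longrightarrow> affine n g \<Longrightarrow> affine n (\<lambda>x. f x + g x)"
proof -
  assume "affine n f" "affine n g"
  then obtain v c w d where "\<forall>x. f x = (\<Sum>j<n. v j * x j) + c" "\<forall>x. g x = (\<Sum>j<n. w j * x j) + d"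
    unfolding affine_def by blast
  then show ?thesis unfolding affine_def
    by (intro exI[of _ "\<lambda>j. v j + w j"] exI[of _ "c + d"]) (simp add: distrib_right sum.distrib)
qed

lemma affine_scale: "affine n f \<Longrightarrow> affine n (\<lambda>x. a * f x)"
proof -
  assume "affine n f"
  then obtain v c where "\<forall>x. f x = (\<Sum>j<n. v j * x j) + c"
    unfolding affine_def by blast
  then show ?thesis unfolding affine_def
    by (intro exI[of _ "\<lambda>j. a * v j"] exI[of _ "a * c"]) (simp add: distrib_left sum_distrib_left mult.assoc)
qed

lemma affine_neg: "affine n f \<Longrightarrow> affine n (\<lambda>x. - f x)"
  using affine_scale[of n f "-1"] by simp

lemma affine_sub: "affine n f \<Longrightarrow> affine n g \<Longrightarrow> affine n (\<lambda>x. f x - g x)"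
  using affine_add[of n f "\<lambda>x. - g x"] affine_neg[of n g] by simp

lemmas affine_intros = affine_add affine_sub affine_neg affine_scale affine_proj affine_const

lemma L1_neuron: "affine n f \<Longrightarrow> L1 n m 1 (\<lambda>x i. ov i * max (f x) 0)"
proof -
  assume "affine n f"
  then obtain v c where vc: "\<forall>x. f x = (\<Sum>j<n. v j * x j) + c"
    unfolding affine_def by blast
  show ?thesis unfolding L1_def
    by (rule exI[of _ "\<lambda>k j. v j"], rule exI[of _ "\<lambda>k. - c"], rule exI[of _ "\<lambda>i k. ov i"]) (simp add: vc)
qed

lemma sum_split_add: "(\<Sum>k<a + b. f k) = (\<Sum>k<a. f k) + (\<Sum>k<b. f (a + k))" for f :: "nat \<Rightarrow> real"
  by (induction b) (auto simp: add.assoc)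

lemma L1_add:
  assumes "L1 n m w1 F" "L1 n m w2 G"
  shows "L1 n m (w1 + w2) (\<lambda>x i. F x i + G x i)"
proof -
  obtain M1 b1 Q1 where 1: "\<forall>x. \<forall>i<m. F x i = (\<Sum>k<w1. Q1 i k * max ((\<Sum>j<n. M1 k j * x j) - b1 k) 0)"
    using assms(1) unfolding L1_def by blast
  obtain M2 b2 Q2 where 2: "\<forall>x. \<forall>i<m. G x i = (\<Sum>k<w2. Q2 i k * max ((\<Sum>j<n. M2 k j * x j) - b2 k) 0)"
    using assms(2) unfolding L1_def by blast
  define M where "M = (\<lambda>k. if k < w1 then M1 k else M2 (k - w1))"
  define b where "b = (\<lambda>k. if k < w1 then b1 k else b2 (k - w1))"
  define Q where "Q = (\<lambda>i k. if k < w1 then Q1 i k else Q2 i (k - w1))"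
  show ?thesis unfolding L1_def
  proof (intro exI allI impI)
    fix x i assume "i < m"
    show "F x i + G x i = (\<Sum>k<w1 + w2. Q i k * max ((\<Sum>j<n. M k j * x j) - b k) 0)"
      unfolding sum_split_add using 1 2 \<open>i < m\<close> by (simp add: M_def b_def Q_def)
  qed
qed

lemma L1_zeros: "L1 n m w (\<lambda>x i. 0)"
  unfolding L1_def by (rule exI[of _ "\<lambda>k j. 0"], rule exI[of _ "\<lambda>k. 0"], rule exI[of _ "\<lambda>i k. 0"]) simp

lemma L1_cong: "L1 n m w F \<Longrightarrow> (\<And>x i. i < m \<Longrightarrow> G x i = F x i) \<Longrightarrow> L1 n m w G"
proof -
  assume a: "L1 n m w F" and e: "\<And>x i. i < m \<Longrightarrow> G x i = F x i"
  then obtain M b Q where h: "\<forall>x. \<forall>i<m. F x i = (\<Sum>k<w. Q i k * max ((\<Sum>j<n. M k j * x j) - b k) 0)"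
    unfolding L1_def by blast
  have "\<forall>x. \<forall>i<m. G x i = (\<Sum>k<w. Q i k * max ((\<Sum>j<n. M k j * x j) - b k) 0)"
    using h e by simp
  then show ?thesis unfolding L1_def by blast
qed

lemma L1_mono: "L1 n m w F \<Longrightarrow> w \<le> w' \<Longrightarrow> L1 n m w' F"
proof -
  assume a: "L1 n m w F" "w \<le> w'"
  have "L1 n m (w + (w' - w)) (\<lambda>x i. F x i + 0)" by (rule L1_add[OF a(1) L1_zeros])
  then show ?thesis using a(2) by simp
qed

lemma L1_NN: "L1 n m w F \<Longrightarrow> NN n m 1 w F"
proof -
  assume "L1 n m w F"
  then obtain M b Q where h: "\<forall>x. \<forall>i<m. F x i = (\<Sum>k<w. Q i k * max ((\<Sum>j<n. M k j * x j) - b k) 0)"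
    unfolding L1_def by blast
  show ?thesis unfolding NN_def
    by (rule exI[of _ M], rule exI[of _ "[(Q, b, w)]"]) (simp add: h stp_def mat_app_def relu_shift_def)
qed

lemma NN_mono: "NN n m L W F \<Longrightarrow> W \<le> W' \<Longrightarrow> NN n m L W' F"
proof -
  assume a: "NN n m L W F" "W \<le> W'"
  then obtain A0 Ls where h: "length Ls = L" "\<forall>l\<in>set Ls. snd (snd l) \<le> W"
     "\<forall>x. \<forall>i<m. foldl stp (mat_app A0 n x) Ls i = F x i" unfolding NN_def by blast
  have "\<forall>l\<in>set Ls. snd (snd l) \<le> W'"
  proof
    fix l assume "l \<in> set Ls"
    then have "snd (snd l) \<le> W" using h(2) by blast
    then show "snd (snd l) \<le> W'" using a(2) by linarith
  qed
  then show ?thesis unfolding NN_def using h by blast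
qed

lemma mat_app_assoc:
  "mat_app B m (mat_app A k h) = mat_app (\<lambda>i j. \<Sum>l<m. B i l * A l j) k h"
proof (rule ext)
  fix i
  have "(\<Sum>l<m. B i l * (\<Sum>j<k. A l j * h j)) = (\<Sum>l<m. \<Sum>j<k. B i l * A l j * h j)"
    by (simp add: sum_distrib_left mult.assoc)
  also have "\<dots> = (\<Sum>j<k. \<Sum>l<m. B i l * A l j * h j)"
    by (rule sum.swap)
  also have "\<dots> = (\<Sum>j<k. (\<Sum>l<m. B i l * A l j) * h j)"
    by (simp add: sum_distrib_right)
  finally show "mat_app B m (mat_app A k h) i = mat_app (\<lambda>i j. \<Sum>l<m. B i l * A l j) k h i"
    unfolding mat_app_def .
qed

lemma eval_cong:
  assumes "\<And>j. j < n \<Longrightarrow> x j = y j"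
  shows "foldl stp (mat_app A0 n x) Ls = foldl stp (mat_app A0 n y) Ls"
proof -
  have "mat_app A0 n x = mat_app A0 n y" unfolding mat_app_def using assms by (intro ext sum.cong) auto
  then show ?thesis by simp
qed

lemma NN_comp:
  assumes f: "NN n m La W F" and g: "NN m p Lb W G" and L: "1 \<le> La"
  shows "NN n p (La + Lb) W (\<lambda>x. G (F x))"
proof -
  obtain A0 Ls1 where 1: "length Ls1 = La" "\<forall>l\<in>set Ls1. snd (snd l) \<le> W"
     "\<forall>x. \<forall>i<m. foldl stp (mat_app A0 n x) Ls1 i = F x i"
    using f unfolding NN_def by blast
  obtain B0 Ls2 where 2: "length Ls2 = Lb" "\<forall>l\<in>set Ls2. snd (snd l) \<le> W"
     "\<forall>x. \<forall>i<p. foldl stp (mat_app B0 m x) Ls2 i = G x i"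
    using g unfolding NN_def by blast
  obtain Ls1' Al bl kl where Ls1: "Ls1 = Ls1' @ [(Al, bl, kl)]"
    using L 1(1) by (cases Ls1 rule: rev_exhaust) auto
  define C where "C = (\<lambda>i j. \<Sum>l<m. B0 i l * Al l j)"
  define Ls where "Ls = Ls1' @ [(C, bl, kl)] @ Ls2"
  show ?thesis unfolding NN_def
  proof (intro exI conjI allI impI)
    have "length Ls1 = Suc (length Ls1')" unfolding Ls1 by (simp only: length_append list.size add_0 add_Suc_right)
    then show "length Ls = La + Lb" unfolding Ls_def using 1(1) 2(1) by (simp only: length_append list.size)
    show "\<forall>l\<in>set Ls. snd (snd l) \<le> W" using 1(2) 2(2) Ls1 by (auto simp: Ls_def)
  next
    fix x i assume i: "i < p"
    define h where "h = foldl stp (mat_app A0 n x) Ls1'"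
    have e1: "foldl stp (mat_app A0 n x) Ls1 = mat_app Al kl (relu_shift bl h)"
      by (simp add: Ls1 h_def stp_def)
    have "foldl stp (mat_app A0 n x) Ls = foldl stp (mat_app C kl (relu_shift bl h)) Ls2"
      by (simp add: Ls_def h_def stp_def)
    also have "mat_app C kl (relu_shift bl h) = mat_app B0 m (foldl stp (mat_app A0 n x) Ls1)"
      unfolding e1 C_def by (simp add: mat_app_assoc)
    finally have "foldl stp (mat_app A0 n x) Ls i = foldl stp (mat_app B0 m (foldl stp (mat_app A0 n x) Ls1)) Ls2 i" by simp
    also have "\<dots> = foldl stp (mat_app B0 m (F x)) Ls2 i"
    proof -
      have "foldl stp (mat_app B0 m (foldl stp (mat_app A0 n x) Ls1)) Ls2 = foldl stp (mat_app B0 m (F x)) Ls2"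
        by (rule eval_cong) (use 1(3) in blast)
      then show ?thesis by simp
    qed
    also have "\<dots> = G (F x) i" using 2(3) i by simp
    finally show "foldl stp (mat_app A0 n x) Ls i = G (F x) i" .
  qed
qed

lemma NN_chain:
  "Fs \<noteq> [] \<Longrightarrow> (\<forall>f\<in>set Fs. L1 k k w f) \<Longrightarrow> w \<le> W \<Longrightarrow> NN k k (length Fs) W (\<lambda>x. foldl (\<lambda>x f. f x) x Fs)"
proof (induction Fs)
  case Nil
  then show ?case by simp
next
  case (Cons f Fs)
  have "L1 k k w f" using Cons.prems(2) by simp
  then have "NN k k 1 w f" by (rule L1_NN)
  then have f: "NN k k 1 W f" using Cons.prems(3) by (rule NN_mono)
  show ?case
  proof (cases "Fs = []")
    case True
    then show ?thesis using f by simp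
  next
    case False
    have "NN k k (1 + length Fs) W (\<lambda>x. foldl (\<lambda>x f. f x) (f x) Fs)"
      using NN_comp[OF f Cons.IH[OF False] ] Cons.prems by auto
    then show ?thesis by simp
  qed
qed

lemma zip_Ls: "zip (map fst Ls) (zip (map (\<lambda>l. fst (snd l)) Ls) (map (\<lambda>l. snd (snd l)) Ls @ [c])) = Ls"
  by (induction Ls) auto

lemma NN_relu_net:
  assumes "NN n m L W F"
  shows "\<exists>d As bs. is_relu_net n m L W d As bs \<and> (\<forall>x. \<forall>i<m. relu_net_eval d As bs x i = F x i)"
proof -
  obtain A0 Ls where h: "length Ls = L" "\<forall>l\<in>set Ls. snd (snd l) \<le> W"
     "\<forall>x. \<forall>i<m. foldl stp (mat_app A0 n x) Ls i = F x i"
    using assms unfolding NN_def by blast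
  define d where "d = n # map (\<lambda>l. snd (snd l)) Ls @ [m]"
  define As where "As = A0 # map fst Ls"
  define bs where "bs = map (\<lambda>l. fst (snd l)) Ls"
  have ev: "relu_net_eval d As bs x = foldl stp (mat_app A0 n x) Ls" for x
    unfolding relu_net_eval_def d_def As_def bs_def stp_def by (simp only: list.sel zip_Ls)
  have net: "is_relu_net n m L W d As bs"
    unfolding is_relu_net_def
  proof (intro conjI ballI)
    show "length d = L + 2" "d ! 0 = n" "d ! (L + 1) = m" "length As = L + 1" "length bs = L"
      using h(1) by (auto simp: d_def As_def bs_def nth_append)
    fix l assume l: "l \<in> {1..L}"
    then have "d ! l = snd (snd (Ls ! (l - 1)))" using h(1) by (cases l) (auto simp: d_def nth_append)
    moreover have "Ls ! (l - 1) \<in> set Ls" using l h(1) by auto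
    ultimately show "d ! l \<le> W" using h(2) by auto
  qed
  have "\<forall>x. \<forall>i<m. relu_net_eval d As bs x i = F x i" unfolding ev using h(3) by blast
  then show ?thesis using net by blast
qed

definition enc :: "real \<times> real \<times> real \<Rightarrow> real \<times> real \<times> real \<Rightarrow> nat \<Rightarrow> real" where
  "enc P Q i = (if i = 0 then fst P else if i = 1 then fst (snd P) else if i = 2 then snd (snd P)
     else if i = 3 then fst Q else if i = 4 then fst (snd Q) else if i = 5 then snd (snd Q) else 0)"

definition twin :: "(real \<times> real \<times> real \<Rightarrow> real \<times> real \<times> real) \<Rightarrow> (nat \<Rightarrow> real) \<Rightarrow> (nat \<Rightarrow> real)" where
  "twin T x = enc (T (x 0, x 1, x 2)) (T (x 3, x 4, x 5))"

lemma twin_enc: "twin T (enc P Q) = enc (T P) (T Q)"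
  by (simp add: twin_def enc_def)

lemma run_twin: "foldl (\<lambda>x f. f x) (enc P Q) (map twin Ts) = enc (run P Ts) (run Q Ts)"
  by (induction Ts arbitrary: P Q) (auto simp: twin_enc)

lemma relu_id: "max y 0 - max (- y) 0 = (y::real)" by (auto simp: max_def)

lemma less6: "(i::nat) < 6 \<Longrightarrow> i = 0 \<or> i = 1 \<or> i = 2 \<or> i = 3 \<or> i = 4 \<or> i = 5" by arith

lemma L1_fold: "L1 6 6 14 (twin (foldT c))"
proof (rule L1_cong)
  show "L1 6 6 14 (\<lambda>x i. (if i = 0 then -1 else 0) * max (x 0 - c) 0 + ((if i = 0 then -1 else 0) * max (c - x 0) 0
     + ((if i = 3 then -1 else 0) * max (x 3 - c) 0 + ((if i = 3 then -1 else 0) * max (c - x 3) 0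
     + (if i = 0 \<or> i = 3 then c else 0) * max 1 0))))"
    apply (rule L1_mono)
     apply (rule L1_add L1_neuron affine_intros | (simp; fail))+
    done
next
  fix x :: "nat \<Rightarrow> real" and i :: nat assume "i < 6"
  then show "twin (foldT c) x i = (if i = 0 then -1 else 0) * max (x 0 - c) 0 + ((if i = 0 then -1 else 0) * max (c - x 0) 0
     + ((if i = 3 then -1 else 0) * max (x 3 - c) 0 + ((if i = 3 then -1 else 0) * max (c - x 3) 0
     + (if i = 0 \<or> i = 3 then c else 0) * max 1 0)))"
    by (auto dest!: less6 simp: twin_def enc_def foldT_def max_def abs_if)
qed

lemma L1_start: "L1 6 6 14 (twin (startT \<alpha> \<beta>))"
proof (rule L1_cong)
  show "L1 6 6 14 (\<lambda>x i.
       (if i = 0 \<or> i = 1 then 1 else 0) * max (\<alpha> * (x 0 - x 2) + \<beta>) 0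
     + ((if i = 0 \<or> i = 1 then -1 else 0) * max (\<alpha> * (x 0 - x 2) + \<beta> - 1) 0
     + ((if i = 0 \<or> i = 1 then 1 else 0) * max (- (\<alpha> * (x 0 - x 2) + \<beta>)) 0
     + ((if i = 0 \<or> i = 1 then -1 else 0) * max (- (\<alpha> * (x 0 - x 2) + \<beta>) - 1) 0
     + ((if i = 3 \<or> i = 4 then 1 else 0) * max (\<alpha> * (x 3 - x 5) + \<beta>) 0
     + ((if i = 3 \<or> i = 4 then -1 else 0) * max (\<alpha> * (x 3 - x 5) + \<beta> - 1) 0
     + ((if i = 3 \<or> i = 4 then 1 else 0) * max (- (\<alpha> * (x 3 - x 5) + \<beta>)) 0
     + (if i = 3 \<or> i = 4 then -1 else 0) * max (- (\<alpha> * (x 3 - x 5) + \<beta>) - 1) 0)))))))"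
    apply (rule L1_mono)
     apply (rule L1_add L1_neuron affine_intros | (simp; fail))+
    done
next
  fix x :: "nat \<Rightarrow> real" and i :: nat assume "i < 6"
  then show "twin (startT \<alpha> \<beta>) x i =
       (if i = 0 \<or> i = 1 then 1 else 0) * max (\<alpha> * (x 0 - x 2) + \<beta>) 0
     + ((if i = 0 \<or> i = 1 then -1 else 0) * max (\<alpha> * (x 0 - x 2) + \<beta> - 1) 0
     + ((if i = 0 \<or> i = 1 then 1 else 0) * max (- (\<alpha> * (x 0 - x 2) + \<beta>)) 0
     + ((if i = 0 \<or> i = 1 then -1 else 0) * max (- (\<alpha> * (x 0 - x 2) + \<beta>) - 1) 0
     + ((if i = 3 \<or> i = 4 then 1 else 0) * max (\<alpha> * (x 3 - x 5) + \<beta>) 0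
     + ((if i = 3 \<or> i = 4 then -1 else 0) * max (\<alpha> * (x 3 - x 5) + \<beta> - 1) 0
     + ((if i = 3 \<or> i = 4 then 1 else 0) * max (- (\<alpha> * (x 3 - x 5) + \<beta>)) 0
     + (if i = 3 \<or> i = 4 then -1 else 0) * max (- (\<alpha> * (x 3 - x 5) + \<beta>) - 1) 0))))))"
    by (auto dest!: less6 simp: twin_def enc_def startT_def absclamp_def)
qed

lemma L1_hat: "L1 6 6 14 (twin (hatT s))"
proof (rule L1_cong)
  show "L1 6 6 14 (\<lambda>x i. (if i = 0 then 1 else 0) * max (x 0) 0
     + ((if i = 0 then -1 else 0) * max (- x 0) 0
     + ((if i = 1 then 2 else if i = 2 then 2 / 4 ^ s else 0) * max (x 1) 0
     + ((if i = 1 then -4 else if i = 2 then -4 / 4 ^ s else 0) * max (x 1 - 1/2) 0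
     + ((if i = 1 then 2 else if i = 2 then 2 / 4 ^ s else 0) * max (x 1 - 1) 0
     + ((if i = 2 then 1 else 0) * max (x 2) 0
     + ((if i = 2 then -1 else 0) * max (- x 2) 0
     + ((if i = 3 then 1 else 0) * max (x 3) 0
     + ((if i = 3 then -1 else 0) * max (- x 3) 0
     + ((if i = 4 then 2 else if i = 5 then 2 / 4 ^ s else 0) * max (x 4) 0
     + ((if i = 4 then -4 else if i = 5 then -4 / 4 ^ s else 0) * max (x 4 - 1/2) 0
     + ((if i = 4 then 2 else if i = 5 then 2 / 4 ^ s else 0) * max (x 4 - 1) 0
     + ((if i = 5 then 1 else 0) * max (x 5) 0
     + ((if i = 5 then -1 else 0) * max (- x 5) 0))))))))))))))"
    apply (rule L1_mono)
     apply (rule L1_add L1_neuron affine_intros | (simp; fail))+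
    done
next
  fix x :: "nat \<Rightarrow> real" and i :: nat assume "i < 6"
  then show "twin (hatT s) x i = (if i = 0 then 1 else 0) * max (x 0) 0
     + ((if i = 0 then -1 else 0) * max (- x 0) 0
     + ((if i = 1 then 2 else if i = 2 then 2 / 4 ^ s else 0) * max (x 1) 0
     + ((if i = 1 then -4 else if i = 2 then -4 / 4 ^ s else 0) * max (x 1 - 1/2) 0
     + ((if i = 1 then 2 else if i = 2 then 2 / 4 ^ s else 0) * max (x 1 - 1) 0
     + ((if i = 2 then 1 else 0) * max (x 2) 0
     + ((if i = 2 then -1 else 0) * max (- x 2) 0
     + ((if i = 3 then 1 else 0) * max (x 3) 0
     + ((if i = 3 then -1 else 0) * max (- x 3) 0
     + ((if i = 4 then 2 else if i = 5 then 2 / 4 ^ s else 0) * max (x 4) 0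
     + ((if i = 4 then -4 else if i = 5 then -4 / 4 ^ s else 0) * max (x 4 - 1/2) 0
     + ((if i = 4 then 2 else if i = 5 then 2 / 4 ^ s else 0) * max (x 4 - 1) 0
     + ((if i = 5 then 1 else 0) * max (x 5) 0
     + ((if i = 5 then -1 else 0) * max (- x 5) 0)))))))))))))"
    by (auto dest!: less6 simp: twin_def enc_def hatT_def Hf_def relu_id add_divide_distrib diff_divide_distrib algebra_simps)
qed

definition inblk :: "real \<Rightarrow> real \<Rightarrow> real \<Rightarrow> real \<Rightarrow> real \<Rightarrow> real \<Rightarrow> (nat \<Rightarrow> real) \<Rightarrow> (nat \<Rightarrow> real)" where
  "inblk a1 b1 c1 a2 b2 c2 x = enc (a1 * x 0 + b1 * x 1 + c1, 0, 0) (a2 * x 0 + b2 * x 1 + c2, 0, 0)"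

lemma L1_in: "L1 2 6 14 (inblk a1 b1 c1 a2 b2 c2)"
proof (rule L1_cong)
  show "L1 2 6 14 (\<lambda>x i. (if i = 0 then 1 else 0) * max (a1 * x 0 + b1 * x 1 + c1) 0
     + ((if i = 0 then -1 else 0) * max (- (a1 * x 0 + b1 * x 1 + c1)) 0
     + ((if i = 3 then 1 else 0) * max (a2 * x 0 + b2 * x 1 + c2) 0
     + ((if i = 3 then -1 else 0) * max (- (a2 * x 0 + b2 * x 1 + c2)) 0))))"
    apply (rule L1_mono)
     apply (rule L1_add L1_neuron affine_intros | (simp; fail))+
    done
next
  fix x :: "nat \<Rightarrow> real" and i :: nat assume "i < 6"
  then show "inblk a1 b1 c1 a2 b2 c2 x i = (if i = 0 then 1 else 0) * max (a1 * x 0 + b1 * x 1 + c1) 0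
     + ((if i = 0 then -1 else 0) * max (- (a1 * x 0 + b1 * x 1 + c1)) 0
     + ((if i = 3 then 1 else 0) * max (a2 * x 0 + b2 * x 1 + c2) 0
     + ((if i = 3 then -1 else 0) * max (- (a2 * x 0 + b2 * x 1 + c2)) 0)))"
    by (auto dest!: less6 simp: inblk_def enc_def relu_id)
qed

definition outblk :: "real \<Rightarrow> (nat \<Rightarrow> real) \<Rightarrow> (nat \<Rightarrow> real)" where
  "outblk K x = (\<lambda>i. K * ((2 * (x 0 - x 2) - 1) + (2 * (x 3 - x 5) - 1)))"

lemma L1_out: "L1 6 1 14 (outblk K)"
proof (rule L1_cong)
  show "L1 6 1 14 (\<lambda>x i. (2 * K) * max (x 0) 0
     + ((- 2 * K) * max (- x 0) 0
     + ((- 2 * K) * max (x 2) 0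
     + ((2 * K) * max (- x 2) 0
     + ((2 * K) * max (x 3) 0
     + ((- 2 * K) * max (- x 3) 0
     + ((- 2 * K) * max (x 5) 0
     + ((2 * K) * max (- x 5) 0
     + ((- 2 * K) * max 1 0)))))))))"
    apply (rule L1_mono)
     apply (rule L1_add L1_neuron affine_intros | (simp; fail))+
    done
next
  fix x :: "nat \<Rightarrow> real" and i :: nat
  have "(2 * K) * max (x 0) 0
     + ((- 2 * K) * max (- x 0) 0
     + ((- 2 * K) * max (x 2) 0
     + ((2 * K) * max (- x 2) 0
     + ((2 * K) * max (x 3) 0
     + ((- 2 * K) * max (- x 3) 0
     + ((- 2 * K) * max (x 5) 0
     + ((2 * K) * max (- x 5) 0
     + ((- 2 * K) * max 1 0)))))))) = 2 * K * (max (x 0) 0 - max (- x 0) 0) - 2 * K * (max (x 2) 0 - max (- x 2) 0)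
      + 2 * K * (max (x 3) 0 - max (- x 3) 0) - 2 * K * (max (x 5) 0 - max (- x 5) 0) - 2 * K"
    by (simp add: algebra_simps)
  then show "outblk K x i = (2 * K) * max (x 0) 0
     + ((- 2 * K) * max (- x 0) 0
     + ((- 2 * K) * max (x 2) 0
     + ((2 * K) * max (- x 2) 0
     + ((2 * K) * max (x 3) 0
     + ((- 2 * K) * max (- x 3) 0
     + ((- 2 * K) * max (x 5) 0
     + ((2 * K) * max (- x 5) 0
     + ((- 2 * K) * max 1 0))))))))"
    by (simp add: outblk_def relu_id algebra_simps)
qed

section \<open>Arithmetic of the size bounds\<close>

lemma ln2_ge_half: "1/2 \<le> ln (2::real)"
proof -
  have e: "exp (1/2::real) * exp (1/2) = exp 1" by (simp flip: exp_add)
  have "exp (1/2::real) \<le> 2"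
  proof (rule ccontr)
    assume "\<not> exp (1/2::real) \<le> 2"
    then have "2 * 2 < exp (1/2::real) * exp (1/2)" by (intro mult_strict_mono) auto
    then show False using e exp_le by simp
  qed
  then have "ln (exp (1/2::real)) \<le> ln 2" by (subst ln_le_cancel_iff) auto
  then show ?thesis by simp
qed

lemma final_arith:
  fixes P Q A N :: real
  assumes P: "1/2 \<le> P" and Q: "1/2 \<le> Q" and A: "A \<le> 8 * P" and N: "N \<le> 12 * Q" "0 \<le> N"
  shows "A + (N + 1) * (2 * N + 1) + 2 \<le> 1000 * P * Q^2"
proof -
  define R where "R = Q^2"
  have "(1/2::real)^2 \<le> Q^2" using Q by (intro power_mono) auto
  then have R: "1/4 \<le> R" unfolding R_def by (simp add: power2_eq_square)
  have PR: "1/8 \<le> P * R"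
  proof -
    have "(1/2) * (1/4) \<le> P * R" using P R by (intro mult_mono) auto
    then show ?thesis by simp
  qed
  have "(N + 1) * (2 * N + 1) \<le> (12 * Q + 1) * (24 * Q + 1)" using N Q by (intro mult_mono) auto
  also have "\<dots> = 288 * R + 36 * Q + 1" unfolding R_def by (simp add: power2_eq_square algebra_simps)
  also have "\<dots> \<le> 364 * R"
  proof -
    have "0 \<le> Q * (2 * Q - 1)" using Q by simp
    then have "Q \<le> 2 * (Q * Q)" by (simp add: algebra_simps)
    then show ?thesis using R unfolding R_def by (simp add: power2_eq_square)
  qed
  finally have h1: "(N + 1) * (2 * N + 1) \<le> 364 * R" .
  have "0 \<le> R * (2 * P - 1)" using P R by simp
  then have h2: "364 * R \<le> 728 * (P * R)" by (simp add: algebra_simps)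
  have "0 \<le> P * (4 * R - 1)" using P R by simp
  then have h3: "8 * P \<le> 32 * (P * R)" by (simp add: algebra_simps)
  have h4: "2 \<le> 16 * (P * R)" using PR by simp
  have "A + (N + 1) * (2 * N + 1) + 2 \<le> 776 * (P * R)" using A h1 h2 h3 h4 by linarith
  also have "\<dots> \<le> 1000 * (P * R)" using PR by simp
  finally show ?thesis unfolding R_def by (simp add: mult.assoc)
qed

lemma nat_ceil_bounds: "0 \<le> x \<Longrightarrow> x \<le> real (nat \<lceil>x\<rceil>) \<and> real (nat \<lceil>x\<rceil>) \<le> x + 1"
proof -
  assume x: "0 \<le> x"
  then have "0 \<le> \<lceil>x\<rceil>" by simp
  then have "real (nat \<lceil>x\<rceil>) = of_int \<lceil>x\<rceil>" by simp
  then show ?thesis using real_nat_ceiling_ge[of x] of_int_ceiling_le_add_one[of x] by simp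
qed

lemma pow_log_ceil: assumes "1 < (b::real)" "0 < y" shows "y \<le> b ^ nat \<lceil>log b y\<rceil>"
proof -
  have "y = b powr log b y" using assms by simp
  also have "\<dots> \<le> b powr real (nat \<lceil>log b y\<rceil>)"
    using assms real_nat_ceiling_ge[of "log b y"] by (intro powr_mono) auto
  also have "\<dots> = b ^ nat \<lceil>log b y\<rceil>" using assms by (simp add: powr_realpow)
  finally show ?thesis .
qed

definition Tcos :: "nat \<Rightarrow> (real \<times> real \<times> real \<Rightarrow> real \<times> real \<times> real) list" where
  "Tcos n = stage (2*n) 1 0 @ stage (2*n) (- (2 * pi^2 / 4 ^ n)) 1 @ concat (replicate (n - 1) (stage (2*n) 2 (-1)))"

lemma term_err:
  assumes "0 \<le> X" "X \<le> 2 ^ a" "1 \<le> n"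
  shows "\<bar>(2 * Dv (run (X, 0, 0) (foldlist a @ Tcos n)) - 1) - cos (2 * pi * X)\<bar> \<le> 180 / 4 ^ n"
proof -
  obtain y where y: "run (X, 0, 0) (foldlist a) = (y, 0, 0)" "0 \<le> y" "y \<le> 1" "cos (2 * pi * y) = cos (2 * pi * X)"
    using folds[OF assms(1,2)] by blast
  have "\<bar>(2 * Dv (run (y, 0, 0) (Tcos n)) - 1) - cos (2 * pi * y)\<bar> \<le> 180 / 4 ^ n"
    unfolding Tcos_def by (rule cos_stage_err[OF y(2,3) assms(3)])
  then show ?thesis using y by simp
qed

definition okT :: "(real \<times> real \<times> real \<Rightarrow> real \<times> real \<times> real) \<Rightarrow> bool" where
  "okT T \<longleftrightarrow> (\<exists>c. T = foldT c) \<or> (\<exists>\<alpha> \<beta>. T = startT \<alpha> \<beta>) \<or> (\<exists>s. T = hatT s)"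

lemma L1_okT: "okT T \<Longrightarrow> L1 6 6 14 (twin T)"
  unfolding okT_def using L1_fold L1_start L1_hat by blast

lemma okT_foldlist: "T \<in> set (foldlist a) \<Longrightarrow> okT T"
  by (induction a) (auto simp: okT_def)

lemma okT_stage: "T \<in> set (stage r \<alpha> \<beta>) \<Longrightarrow> okT T"
  by (auto simp: stage_def hats_def okT_def)

lemma okT_all: "T \<in> set (foldlist a @ Tcos n) \<Longrightarrow> okT T"
  by (auto simp: Tcos_def intro: okT_foldlist okT_stage)

lemma length_stage: "length (stage r \<alpha> \<beta>) = Suc r" by (simp add: stage_def hats_def)

lemma length_all: "1 \<le> n \<Longrightarrow> length (foldlist a @ Tcos n) = a + (n + 1) * (2 * n + 1)"
proof -
  assume n: "1 \<le> n"
  have "length (concat (replicate (n - 1) (stage (2*n) 2 (-1)))) = (n - 1) * (2 * n + 1)"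
    by (simp add: length_concat length_stage sum_list_replicate)
  then have "length (foldlist a @ Tcos n) = a + (2 * n + 1) + (2 * n + 1) + (n - 1) * (2 * n + 1)"
    by (simp add: Tcos_def length_stage)
  also have "\<dots> = a + (n + 1) * (2 * n + 1)" using n by (cases n) (auto simp: algebra_simps)
  finally show ?thesis .
qed

lemma amp_bounds: "1 \<le> amp n \<and> amp n \<le> sqrt 2"
  by (auto simp: amp_def)

lemma fr_bounds: "j \<le> m \<Longrightarrow> 0 \<le> fr j \<and> fr j \<le> real m / 2"
proof -
  assume "j \<le> m"
  moreover have "2 * (j div 2) \<le> j" by simp
  ultimately have "2 * (j div 2) \<le> m" by linarith
  then have "2 * real (j div 2) \<le> real m" by linarith
  then show ?thesis by (simp add: fr_def)
qed

lemma ph_bounds: "- 1/4 \<le> ph n \<and> ph n \<le> 0" by (simp add: ph_def)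

theorem lemmaE2:
  "\<exists>c>0. \<forall>j k :: nat. \<forall>\<epsilon> :: real. 1 \<le> j \<longrightarrow> 1 \<le> k \<longrightarrow> 0 < \<epsilon> \<longrightarrow> \<epsilon> < 1/2 \<longrightarrow>
     (\<exists>L W d As bs.
        is_relu_net 2 1 L W d As bs \<and>
        real L \<le> c * ln (2 * real (max j k)) * (ln (1 / \<epsilon>))^2 \<and>
        real W \<le> c * ln (2 * real (max j k)) * (ln (1 / \<epsilon>))^3 \<and>
        (\<forall>s\<in>{0..1}. \<forall>t\<in>{0..1}.
           \<bar>fourier_psi j s * fourier_psi k t -
            relu_net_eval d As bs (\<lambda>i. if i = 0 then s else t) 0\<bar> \<le> \<epsilon>))"
proof (rule exI[of _ "1000::real"], intro conjI allI impI)
  show "(0::real) < 1000" by simp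
  fix j k :: nat and \<epsilon> :: real
  assume j: "1 \<le> j" and k: "1 \<le> k" and e0: "0 < \<epsilon>" and e1: "\<epsilon> < 1/2"
  define m where "m = max j k"
  have m1: "1 \<le> m" using j unfolding m_def by simp
  define a where "a = nat \<lceil>log 2 (real m + 2)\<rceil>"
  define n where "n = nat \<lceil>log 4 (360 / \<epsilon>)\<rceil>"
  have a_pow: "real m + 2 \<le> 2 ^ a" unfolding a_def by (rule pow_log_ceil) auto
  have n_pow: "360 / \<epsilon> \<le> 4 ^ n" unfolding n_def by (rule pow_log_ceil) (use e0 in auto)
  have l4: "0 < log 4 (360 / \<epsilon>)" using e0 e1 by (subst zero_less_log_cancel_iff) auto
  have n1: "1 \<le> n" unfolding n_def using l4 by linarith
  have l2: "0 \<le> log 2 (real m + 2)" by simp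
  have a_le: "real a \<le> log 2 (real m + 2) + 1" using nat_ceil_bounds[OF l2] unfolding a_def by simp
  have n_le: "real n \<le> log 4 (360 / \<epsilon>) + 1" using nat_ceil_bounds[of "log 4 (360 / \<epsilon>)"] l4 unfolding n_def by simp
  define K where "K = amp j * amp k / 2"
  define Tall where "Tall = foldlist a @ Tcos n"
  define In where "In = inblk (fr j) (fr k) (ph j + ph k + 1) (fr j) (- fr k) (ph j - ph k + fr k + 1)"
  define Mid where "Mid = (\<lambda>x. foldl (\<lambda>x f. f x) x (map twin Tall))"
  have NNin: "NN 2 6 1 14 In" unfolding In_def by (rule L1_NN[OF L1_in])
  have ne: "map twin Tall \<noteq> []" by (simp add: Tall_def Tcos_def stage_def)
  have allL1: "\<forall>f\<in>set (map twin Tall). L1 6 6 14 f" using okT_all L1_okT unfolding Tall_def by auto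
  have NNmid: "NN 6 6 (length Tall) 14 Mid"
    using NN_chain[OF ne allL1 order.refl] unfolding Mid_def by simp
  have NNout: "NN 6 1 1 14 (outblk K)" by (rule L1_NN[OF L1_out])
  have NN1: "NN 2 6 (1 + length Tall) 14 (\<lambda>x. Mid (In x))" by (rule NN_comp[OF NNin NNmid]) simp
  have NN2: "NN 2 1 (1 + length Tall + 1) 14 (\<lambda>x. outblk K (Mid (In x)))" by (rule NN_comp[OF NN1 NNout]) simp
  obtain d As bs where net: "is_relu_net 2 1 (1 + length Tall + 1) 14 d As bs"
     and ev: "\<forall>x. \<forall>i<1. relu_net_eval d As bs x i = outblk K (Mid (In x)) i"
    using NN_relu_net[OF NN2] by blast
  define P where "P = ln (2 * real m)"
  define Q where "Q = ln (1 / \<epsilon>)"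
  have ln2: "1/2 \<le> ln (2::real)" by (rule ln2_ge_half)
  have P: "1/2 \<le> P"
  proof -
    have "ln 2 \<le> ln (2 * real m)" using m1 by (subst ln_le_cancel_iff) auto
    then show ?thesis using ln2 unfolding P_def by linarith
  qed
  have Q: "1/2 \<le> Q"
  proof -
    have "ln 2 \<le> ln (1 / \<epsilon>)" using e0 e1 by (subst ln_le_cancel_iff) (auto simp: field_simps)
    then show ?thesis using ln2 unfolding Q_def by linarith
  qed
  have aP: "real a \<le> 8 * P"
  proof -
    have "ln (real m + 2) \<le> ln (2 * (2 * real m))" using m1 by (subst ln_le_cancel_iff) auto
    also have "\<dots> = ln 2 + P" unfolding P_def using m1 by (subst ln_mult) auto
    finally have h: "ln (real m + 2) \<le> ln 2 + P" .
    have "log 2 (real m + 2) = ln (real m + 2) / ln 2" by (simp add: log_def)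
    also have "\<dots> \<le> (ln 2 + P) / ln 2" using h ln2 by (intro divide_right_mono) auto
    also have "\<dots> = 1 + P / ln 2" using ln2 by (simp add: field_simps)
    also have "\<dots> \<le> 1 + 2 * P" using ln2 P by (simp add: field_simps)
    finally show ?thesis using a_le P by linarith
  qed
  have nQ: "real n \<le> 12 * Q"
  proof -
    have "ln (360::real) \<le> ln (2 ^ 9)" by (subst ln_le_cancel_iff) auto
    also have "\<dots> = 9 * ln 2" by (subst ln_realpow) auto
    finally have h360: "ln (360::real) \<le> 9 * ln 2" .
    have "ln ((2::real)^2) = 2 * ln 2" by (subst ln_realpow) auto
    then have l4: "ln (4::real) = 2 * ln 2" by simp
    have "log 4 (360 / \<epsilon>) = (ln 360 + Q) / (2 * ln 2)"
      unfolding log_def l4 Q_def using e0 by (simp add: ln_div)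
    also have "\<dots> \<le> (9 * ln 2 + Q) / (2 * ln 2)" using h360 ln2 by (intro divide_right_mono) auto
    also have "\<dots> = 9/2 + Q / (2 * ln 2)" using ln2 by (simp add: field_simps)
    also have "\<dots> \<le> 9/2 + Q" using ln2 Q by (simp add: field_simps)
    finally show ?thesis using n_le Q by linarith
  qed
  have Lbound: "real (1 + length Tall + 1) \<le> 1000 * ln (2 * real (max j k)) * (ln (1 / \<epsilon>))^2"
  proof -
    have "real (1 + length Tall + 1) = real a + (real n + 1) * (2 * real n + 1) + 2"
      unfolding Tall_def length_all[OF n1] by (simp add: algebra_simps)
    also have "\<dots> \<le> 1000 * P * Q^2" by (rule final_arith[OF P Q aP nQ]) simp
    finally show ?thesis unfolding P_def Q_def m_def .
  qed
  have Wbound: "real (14::nat) \<le> 1000 * ln (2 * real (max j k)) * (ln (1 / \<epsilon>))^3"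
  proof -
    have "(1/2::real)^3 \<le> Q^3" using Q by (intro power_mono) auto
    then have "(1/2) * (1/2)^3 \<le> P * Q^3" using P by (intro mult_mono) auto
    moreover have "(1/2::real) * (1/2)^3 = 1/16" by (simp add: power3_eq_cube)
    ultimately have "1/16 \<le> P * Q^3" by linarith
    then have "14 \<le> 1000 * (P * Q^3)" by linarith
    then show ?thesis unfolding P_def Q_def m_def by (simp add: mult.assoc)
  qed
  show "\<exists>L W d As bs.
        is_relu_net 2 1 L W d As bs \<and>
        real L \<le> 1000 * ln (2 * real (max j k)) * (ln (1 / \<epsilon>))^2 \<and>
        real W \<le> 1000 * ln (2 * real (max j k)) * (ln (1 / \<epsilon>))^3 \<and>
        (\<forall>s\<in>{0..1}. \<forall>t\<in>{0..1}.
           \<bar>fourier_psi j s * fourier_psi k t -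
            relu_net_eval d As bs (\<lambda>i. if i = 0 then s else t) 0\<bar> \<le> \<epsilon>)"
  proof (intro exI conjI ballI)
    show "is_relu_net 2 1 (1 + length Tall + 1) 14 d As bs" by (rule net)
    show "real (1 + length Tall + 1) \<le> 1000 * ln (2 * real (max j k)) * (ln (1 / \<epsilon>))^2" by (rule Lbound)
    show "real (14::nat) \<le> 1000 * ln (2 * real (max j k)) * (ln (1 / \<epsilon>))^3" by (rule Wbound)
  next
    fix s t :: real assume s: "s \<in> {0..1}" and t: "t \<in> {0..1}"
    define X1 where "X1 = fr j * s + fr k * t + (ph j + ph k + 1)"
    define X2 where "X2 = fr j * s - fr k * t + (ph j - ph k + fr k + 1)"
    define xin where "xin = (\<lambda>i::nat. if i = 0 then s else t)"
    have "In xin = enc (X1, 0, 0) (X2, 0, 0)" unfolding In_def inblk_def X1_def X2_def xin_def by simp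
    then have "Mid (In xin) = enc (run (X1, 0, 0) Tall) (run (X2, 0, 0) Tall)"
      unfolding Mid_def by (simp add: run_twin)
    then have out: "relu_net_eval d As bs xin 0 = K * ((2 * Dv (run (X1, 0, 0) Tall) - 1) + (2 * Dv (run (X2, 0, 0) Tall) - 1))"
      using ev by (simp add: outblk_def enc_def Dv_def)
    have fj: "0 \<le> fr j \<and> fr j \<le> real m / 2" using fr_bounds[of j m] unfolding m_def by simp
    have fk: "0 \<le> fr k \<and> fr k \<le> real m / 2" using fr_bounds[of k m] unfolding m_def by simp
    have pj: "- 1/4 \<le> ph j \<and> ph j \<le> 0" by (rule ph_bounds)
    have pk: "- 1/4 \<le> ph k \<and> ph k \<le> 0" by (rule ph_bounds)
    have sj: "0 \<le> fr j * s \<and> fr j * s \<le> fr j" using fj s by (auto simp: mult_left_le)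
    have tk: "0 \<le> fr k * t \<and> fr k * t \<le> fr k" using fk t by (auto simp: mult_left_le)
    have X1r: "0 \<le> X1" "X1 \<le> 2 ^ a" using sj tk fj fk pj pk a_pow unfolding X1_def by auto
    have X2r: "0 \<le> X2" "X2 \<le> 2 ^ a" using sj tk fj fk pj pk a_pow unfolding X2_def by auto
    have e1': "\<bar>(2 * Dv (run (X1, 0, 0) Tall) - 1) - cos (2 * pi * X1)\<bar> \<le> 180 / 4 ^ n"
      unfolding Tall_def by (rule term_err[OF X1r n1])
    have e2': "\<bar>(2 * Dv (run (X2, 0, 0) Tall) - 1) - cos (2 * pi * X2)\<bar> \<le> 180 / 4 ^ n"
      unfolding Tall_def by (rule term_err[OF X2r n1])
    have target: "fourier_psi j s * fourier_psi k t = K * (cos (2 * pi * X1) + cos (2 * pi * X2))"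
      unfolding K_def X1_def X2_def by (rule prod_rep[OF j k])
    have K0: "0 \<le> K" and K1: "K \<le> 1"
    proof -
      have "1 \<le> amp j" "amp j \<le> sqrt 2" "1 \<le> amp k" "amp k \<le> sqrt 2" using amp_bounds by auto
      moreover have "sqrt 2 * sqrt 2 = (2::real)" by simp
      ultimately have "amp j * amp k \<le> 2" "0 \<le> amp j * amp k"
        by (metis mult_mono order_trans zero_le_one) (use \<open>1 \<le> amp j\<close> \<open>1 \<le> amp k\<close> in simp)
      then show "0 \<le> K" "K \<le> 1" unfolding K_def by auto
    qed
    have "\<bar>fourier_psi j s * fourier_psi k t - relu_net_eval d As bs xin 0\<bar>
        = K * \<bar>(cos (2 * pi * X1) - (2 * Dv (run (X1, 0, 0) Tall) - 1)) + (cos (2 * pi * X2) - (2 * Dv (run (X2, 0, 0) Tall) - 1))\<bar>"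
    proof -
      have "fourier_psi j s * fourier_psi k t - relu_net_eval d As bs xin 0
        = K * ((cos (2 * pi * X1) - (2 * Dv (run (X1, 0, 0) Tall) - 1)) + (cos (2 * pi * X2) - (2 * Dv (run (X2, 0, 0) Tall) - 1)))"
        unfolding target out by (simp add: algebra_simps)
      then show ?thesis using K0 by (simp add: abs_mult)
    qed
    also have "\<dots> \<le> K * (180 / 4 ^ n + 180 / 4 ^ n)"
      using e1' e2' K0 by (intro mult_left_mono) (auto simp: abs_minus_commute intro!: order_trans[OF abs_triangle_ineq add_mono])
    also have "\<dots> \<le> 1 * (180 / 4 ^ n + 180 / 4 ^ n)" using K1 by (intro mult_right_mono) auto
    also have "\<dots> \<le> \<epsilon>"
    proof -
      have "360 \<le> \<epsilon> * 4 ^ n" using n_pow e0 by (simp add: field_simps)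
      then have h: "360 / 4 ^ n \<le> \<epsilon>" using e0 by (simp add: field_simps)
      have "1 * (180 / 4 ^ n + 180 / 4 ^ n) = (360::real) / 4 ^ n" by simp
      then show ?thesis using h by simp
    qed
    finally show "\<bar>fourier_psi j s * fourier_psi k t - relu_net_eval d As bs (\<lambda>i. if i = 0 then s else t) 0\<bar> \<le> \<epsilon>"
      unfolding xin_def .
  qed
qed

end
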